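(* The category $\mathbf{USppQu}$ of unitally supported quantales is a full and reflective subcategory of $\mathbf{SppUQu}$. For each object $(Q,\varsigma)$ of $\mathbf{SppUQu}$ the reflection $\eta:(Q,\varsigma)\to(Q,\varsigma_e)$ is obtained by defining the unital support $\varsigma_e(x)=\varsigma(x)\triangleright e$ for all $x\in Q$ and setting $\eta_1=\mathrm{id}_Q$ and $\eta_0(a)=a\triangleright e$ for all $a\in Q_0$.
   Context: For a locale $A$, an $A$-$A$-bimodule is a sup-lattice $M$ with actions $a\triangleright m$, $m\triangleleft a$ preserving joins in each variable, with $1_A\triangleright m=m$, $(a\wedge b)\triangleright m=a\triangleright(b\triangleright m)$, $m\triangleleft1_A=m$, $m\triangleleft(a\wedge b)=(m\triangleleft a)\triangleleft b$, $(a\triangleright m)\triangleleft b=a\triangleright(m\triangleleft b)$. An $A$-$A$-quantale is such a $Q$ with associative join-preserving multiplication and $(a\triangleright x)y=a\triangleright(xy)$, $(x\triangleleft a)y=x(a\triangleright y)$, $(xy)\triangleleft a=x(y\triangleleft a)$; involutive if there is a join-preserving $x\mapsto x^*$ with $x^{**}=x$, $(xy)^*=y^*x^*$, $(a\triangleright(x\triangleleft b))^*=b\triangleright(x^*\triangleleft a)$. A based quantale is an involutive $Q_0$-$Q_0$-quantale for a locale $Q_0$; a support is a join-preserving $\varsigma:Q\to Q_0$ with $\varsigma(1_Q)=1_{Q_0}$, $\varsigma(x)\triangleright y\le xx^*y$, $\varsigma(x)\triangleright x=x$. A morphism of supported quantales $f:Q\to R$ is a pair $(f_1,f_0)$, $f_1$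 a homomorphism of involutive quantales, $f_0:Q_0\to R_0$ a frame homomorphism, with $f_1(a\triangleright x)=f_0(a)\triangleright f_1(x)$, $f_1(x\triangleleft a)=f_1(x)\triangleleft f_0(a)$ and $f_0\circ\varsigma_Q=\varsigma_R\circ f_1$. $\mathbf{SppUQu}$: supported quantales whose quantale $Q$ has a multiplicative unit $e$, with morphisms such that $f_1$ preserves the unit. A unital support on a unital involutive quantale $Q$ is a join-preserving $\varsigma:Q\to Q$ with $\varsigma(x)\le e$, $\varsigma(x)\le xx^*$, $x\le\varsigma(x)x$; $\mathbf{USppQu}$ has these as objects and unital involutive quantale homomorphisms commuting with supports as morphisms. $\mathbf{USppQu}$ is identified with a subcategory of $\mathbf{SppUQu}$ by regarding $(Q,\varsigma)$ as a based quantale with $Q_0={\downarrow}e$ and actions $a\triangleright x=ax$, $x\triangleleft a=xa$, and a morphism $f$ as $(f,f|_{{\downarrow}e})$. *)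

theory Defs
  imports Main
begin

(* Sup-lattices are complete lattices (types of class complete_lattice).
   A supported quantale over a base locale: the quantale Q is the whole type 'q;
   the base locale Q_0 is a carrier set A :: 'a set inside a complete lattice 'a,
   closed under the ambient joins and binary meets, with the induced order.
   (Every locale L is represented by A = UNIV :: L set.) *)

record ('q, 'a) sqb =
  qmul  :: "'q \<Rightarrow> 'q \<Rightarrow> 'q"
  qinv  :: "'q \<Rightarrow> 'q"
  qunit :: "'q"
  base  :: "'a set"
  lact  :: "'a \<Rightarrow> 'q \<Rightarrow> 'q"
  ract  :: "'q \<Rightarrow> 'a \<Rightarrow> 'q"
  supp  :: "'q \<Rightarrow> 'a"

record 'q usq =
  umul  :: "'q \<Rightarrow> 'q \<Rightarrow> 'q"
  uinv  :: "'q \<Rightarrow> 'q"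
  uunit :: "'q"
  usupp :: "'q \<Rightarrow> 'q"

definition is_locale :: "'a::complete_lattice set \<Rightarrow> bool" where
  "is_locale A \<longleftrightarrow>
     (\<forall>S. S \<subseteq> A \<longrightarrow> Sup S \<in> A) \<and>
     (\<forall>a\<in>A. \<forall>b\<in>A. inf a b \<in> A) \<and>
     (\<forall>a\<in>A. \<forall>S. S \<subseteq> A \<longrightarrow> inf a (Sup S) = Sup ((\<lambda>b. inf a b) ` S))"

definition is_bimodule ::
  "'a::complete_lattice set \<Rightarrow> ('a \<Rightarrow> 'q::complete_lattice \<Rightarrow> 'q) \<Rightarrow> ('q \<Rightarrow> 'a \<Rightarrow> 'q) \<Rightarrow> bool" where
  "is_bimodule A la ra \<longleftrightarrow>
     (\<forall>S m. S \<subseteq> A \<longrightarrow> la (Sup S) m = Sup ((\<lambda>a. la a m) ` S)) \<and>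
     (\<forall>a\<in>A. \<forall>T. la a (Sup T) = Sup (la a ` T)) \<and>
     (\<forall>S m. S \<subseteq> A \<longrightarrow> ra m (Sup S) = Sup ((\<lambda>a. ra m a) ` S)) \<and>
     (\<forall>a\<in>A. \<forall>T. ra (Sup T) a = Sup ((\<lambda>m. ra m a) ` T)) \<and>
     (\<forall>m. la (Sup A) m = m) \<and>
     (\<forall>a\<in>A. \<forall>b\<in>A. \<forall>m. la (inf a b) m = la a (la b m)) \<and>
     (\<forall>m. ra m (Sup A) = m) \<and>
     (\<forall>a\<in>A. \<forall>b\<in>A. \<forall>m. ra m (inf a b) = ra (ra m a) b) \<and>
     (\<forall>a\<in>A. \<forall>b\<in>A. \<forall>m. ra (la a m) b = la a (ra m b))"

definition is_quantale :: "('q::complete_lattice \<Rightarrow> 'q \<Rightarrow> 'q) \<Rightarrow> bool" where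
  "is_quantale mul \<longleftrightarrow>
     (\<forall>x y z. mul (mul x y) z = mul x (mul y z)) \<and>
     (\<forall>S y. mul (Sup S) y = Sup ((\<lambda>x. mul x y) ` S)) \<and>
     (\<forall>x T. mul x (Sup T) = Sup (mul x ` T))"

definition is_involution :: "('q::complete_lattice \<Rightarrow> 'q \<Rightarrow> 'q) \<Rightarrow> ('q \<Rightarrow> 'q) \<Rightarrow> bool" where
  "is_involution mul iv \<longleftrightarrow>
     (\<forall>x. iv (iv x) = x) \<and>
     (\<forall>x y. iv (mul x y) = mul (iv y) (iv x)) \<and>
     (\<forall>S. iv (Sup S) = Sup (iv ` S))"

definition is_unit :: "('q \<Rightarrow> 'q \<Rightarrow> 'q) \<Rightarrow> 'q \<Rightarrow> bool" where
  "is_unit mul e \<longleftrightarrow> (\<forall>x. mul e x = x \<and> mul x e = x)"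

definition based_quantale :: "('q::complete_lattice, 'a::complete_lattice) sqb \<Rightarrow> bool" where
  "based_quantale S \<longleftrightarrow>
     is_locale (base S) \<and>
     is_bimodule (base S) (lact S) (ract S) \<and>
     is_quantale (qmul S) \<and>
     (\<forall>a\<in>base S. \<forall>x y. qmul S (lact S a x) y = lact S a (qmul S x y)) \<and>
     (\<forall>a\<in>base S. \<forall>x y. qmul S (ract S x a) y = qmul S x (lact S a y)) \<and>
     (\<forall>a\<in>base S. \<forall>x y. ract S (qmul S x y) a = qmul S x (ract S y a)) \<and>
     is_involution (qmul S) (qinv S) \<and>
     (\<forall>a\<in>base S. \<forall>b\<in>base S. \<forall>x.
        qinv S (lact S a (ract S x b)) = lact S b (ract S (qinv S x) a))"

definition is_support :: "('q::complete_lattice, 'a::complete_lattice) sqb \<Rightarrow> bool" where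
  "is_support S \<longleftrightarrow>
     (\<forall>X. supp S (Sup X) = Sup (supp S ` X)) \<and>
     (\<forall>x. supp S x \<in> base S) \<and>
     supp S top = Sup (base S) \<and>
     (\<forall>x y. lact S (supp S x) y \<le> qmul S (qmul S x (qinv S x)) y) \<and>
     (\<forall>x. lact S (supp S x) x = x)"

definition sppuqu_obj :: "('q::complete_lattice, 'a::complete_lattice) sqb \<Rightarrow> bool" where
  "sppuqu_obj S \<longleftrightarrow> based_quantale S \<and> is_support S \<and> is_unit (qmul S) (qunit S)"

definition sppuqu_mor ::
  "('q::complete_lattice, 'a::complete_lattice) sqb \<Rightarrow> ('r::complete_lattice, 'b::complete_lattice) sqb
   \<Rightarrow> ('q \<Rightarrow> 'r) \<Rightarrow> ('a \<Rightarrow> 'b) \<Rightarrow> bool" where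
  "sppuqu_mor S T f1 f0 \<longleftrightarrow>
     (\<forall>X. f1 (Sup X) = Sup (f1 ` X)) \<and>
     (\<forall>x y. f1 (qmul S x y) = qmul T (f1 x) (f1 y)) \<and>
     (\<forall>x. f1 (qinv S x) = qinv T (f1 x)) \<and>
     f1 (qunit S) = qunit T \<and>
     f0 ` base S \<subseteq> base T \<and>
     (\<forall>X. X \<subseteq> base S \<longrightarrow> f0 (Sup X) = Sup (f0 ` X)) \<and>
     (\<forall>a\<in>base S. \<forall>b\<in>base S. f0 (inf a b) = inf (f0 a) (f0 b)) \<and>
     f0 (Sup (base S)) = Sup (base T) \<and>
     (\<forall>a\<in>base S. \<forall>x. f1 (lact S a x) = lact T (f0 a) (f1 x)) \<and>
     (\<forall>a\<in>base S. \<forall>x. f1 (ract S x a) = ract T (f1 x) (f0 a)) \<and>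
     (\<forall>x. f0 (supp S x) = supp T (f1 x))"

definition usppqu_obj :: "'q::complete_lattice usq \<Rightarrow> bool" where
  "usppqu_obj U \<longleftrightarrow>
     is_quantale (umul U) \<and> is_involution (umul U) (uinv U) \<and> is_unit (umul U) (uunit U) \<and>
     (\<forall>X. usupp U (Sup X) = Sup (usupp U ` X)) \<and>
     (\<forall>x. usupp U x \<le> uunit U) \<and>
     (\<forall>x. usupp U x \<le> umul U x (uinv U x)) \<and>
     (\<forall>x. x \<le> umul U (usupp U x) x)"

definition usppqu_mor :: "'q::complete_lattice usq \<Rightarrow> 'r::complete_lattice usq \<Rightarrow> ('q \<Rightarrow> 'r) \<Rightarrow> bool" where
  "usppqu_mor U V f \<longleftrightarrow>
     (\<forall>X. f (Sup X) = Sup (f ` X)) \<and>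
     (\<forall>x y. f (umul U x y) = umul V (f x) (f y)) \<and>
     (\<forall>x. f (uinv U x) = uinv V (f x)) \<and>
     f (uunit U) = uunit V \<and>
     (\<forall>x. f (usupp U x) = usupp V (f x))"

(* the identification of USppQu objects as objects of SppUQu: Q_0 = \<down>e, actions = multiplication;
   a morphism f is identified with (f, f|\<down>e) *)
definition emb :: "'q::complete_lattice usq \<Rightarrow> ('q, 'q) sqb" where
  "emb U = \<lparr>qmul = umul U, qinv = uinv U, qunit = uunit U, base = {x. x \<le> uunit U},
            lact = umul U, ract = umul U, supp = usupp U\<rparr>"

definition reflect :: "('q::complete_lattice, 'a::complete_lattice) sqb \<Rightarrow> 'q usq" where
  "reflect S = \<lparr>umul = qmul S, uinv = qinv S, uunit = qunit S,
                usupp = (\<lambda>x. lact S (supp S x) (qunit S))\<rparr>"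

end

theory Submission
  imports Defs
begin


lemma quant_mono1:
  assumes "is_quantale m" "x \<le> y" shows "m x z \<le> m y z"
proof -
  have "m (Sup {x,y}) z = Sup ((\<lambda>x. m x z) ` {x,y})" using assms(1) unfolding is_quantale_def by blast
  moreover have "Sup {x,y} = y" using assms(2) by (simp add: sup_absorb2)
  ultimately show ?thesis by (metis Sup_insert sup.cobounded1 image_insert)
qed

lemma quant_mono2:
  assumes "is_quantale m" "x \<le> y" shows "m z x \<le> m z y"
proof -
  have "m z (Sup {x,y}) = Sup (m z ` {x,y})" using assms(1) unfolding is_quantale_def by blast
  moreover have "Sup {x,y} = y" using assms(2) by (simp add: sup_absorb2)
  ultimately show ?thesis by (metis Sup_insert sup.cobounded1 image_insert)
qed

lemma inv_mono:
  assumes "is_involution m i" "x \<le> y" shows "i x \<le> i y"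
proof -
  have "i (Sup {x,y}) = Sup (i ` {x,y})" using assms(1) unfolding is_involution_def by blast
  moreover have "Sup {x,y} = y" using assms(2) by (simp add: sup_absorb2)
  ultimately show ?thesis by (metis Sup_insert sup.cobounded1 image_insert)
qed

lemma fun_mono:
  fixes f :: "'a::complete_lattice \<Rightarrow> 'b::complete_lattice"
  assumes "\<forall>X. f (Sup X) = Sup (f ` X)" "x \<le> y" shows "f x \<le> f y"
proof -
  have "f (Sup {x,y}) = Sup (f ` {x,y})" using assms(1) by blast
  moreover have "Sup {x,y} = y" using assms(2) by (simp add: sup_absorb2)
  ultimately show ?thesis by (metis Sup_insert sup.cobounded1 image_insert)
qed

locale uq =
  fixes U :: "'q::complete_lattice usq"
  assumes obj: "usppqu_obj U"
begin
abbreviation "m \<equiv> umul U"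
abbreviation "i \<equiv> uinv U"
abbreviation "e \<equiv> uunit U"
abbreviation "s \<equiv> usupp U"

lemma Q: "is_quantale m" using obj unfolding usppqu_obj_def by blast
lemma I: "is_involution m i" using obj unfolding usppqu_obj_def by blast
lemma Un: "m e x = x" "m x e = x" using obj unfolding usppqu_obj_def is_unit_def by auto
lemma assoc: "m (m x y) z = m x (m y z)" using Q unfolding is_quantale_def by blast
lemma ii: "i (i x) = x" using I unfolding is_involution_def by blast
lemma imul: "i (m x y) = m (i y) (i x)" using I unfolding is_involution_def by blast
lemma sSup: "s (Sup X) = Sup (s ` X)" using obj unfolding usppqu_obj_def by blast
lemma se: "s x \<le> e" using obj unfolding usppqu_obj_def by blast
lemma sxx: "s x \<le> m x (i x)" using obj unfolding usppqu_obj_def by blast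
lemma xsx: "x \<le> m (s x) x" using obj unfolding usppqu_obj_def by blast
lemma m1: "x \<le> y \<Longrightarrow> m x z \<le> m y z" using quant_mono1[OF Q] .
lemma m2: "x \<le> y \<Longrightarrow> m z x \<le> m z y" using quant_mono2[OF Q] .

lemma ie: "i e = e"
proof -
  have "i (m e (i e)) = m e (i e)" by (simp add: imul ii)
  then show ?thesis by (simp add: Un ii)
qed

lemma ile: "a \<le> e \<Longrightarrow> i a \<le> e" using inv_mono[OF I, of a e] ie by simp
lemma la: "a \<le> e \<Longrightarrow> m a x \<le> x" using m1[of a e x] Un by simp
lemma ra: "a \<le> e \<Longrightarrow> m x a \<le> x" using m2[of a e x] Un by simp

lemma s_id: assumes "a \<le> e" shows "s a = a"
proof (rule antisym)
  show "s a \<le> a" using sxx[of a] ra[OF ile[OF assms], of a] by simp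
  have "m (s a) a \<le> s a" using ra[OF assms] .
  then show "a \<le> s a" using xsx[of a] by simp
qed

lemma idem: assumes "a \<le> e" shows "m a a = a"
  using xsx[of a] la[OF assms, of a] s_id[OF assms] by simp

lemma meet: assumes "a \<le> e" "b \<le> e" shows "m a b = inf a b"
proof (rule antisym)
  show "m a b \<le> inf a b" using la[OF assms(1), of b] ra[OF assms(2), of a] by simp
  have c: "inf a b \<le> e" using assms by (meson inf.coboundedI1)
  have "m (inf a b) (inf a b) \<le> m a b"
    by (meson inf.cobounded1 inf.cobounded2 m1 m2 order_trans)
  then show "inf a b \<le> m a b" using idem[OF c] by simp
qed

lemma inv_id: assumes "a \<le> e" shows "i a = a"
proof -
  have g: "b \<le> e \<Longrightarrow> b \<le> i b" for b
    using sxx[of b] s_id[of b] la[of b "i b"] by simp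
  show ?thesis using g[OF assms] g[OF ile[OF assms]] ii[of a] by simp
qed

lemma s_top: "s top = e"
proof (rule antisym)
  show "s top \<le> e" by (rule se)
  have "s e \<le> s top" using fun_mono[of s e top] sSup by simp
  then show "e \<le> s top" using s_id[of e] by simp
qed

lemma Sup_base: "Sup {x. x \<le> e} = e"
  using Sup_atMost[of e] by (simp add: atMost_def)


lemma Sup_le_e: "S \<subseteq> {x. x \<le> e} \<Longrightarrow> Sup S \<le> e"
  by (auto intro: Sup_least)

lemma QS: "m (Sup S) y = Sup ((\<lambda>x. m x y) ` S)" "m x (Sup T) = Sup (m x ` T)"
  using Q unfolding is_quantale_def by blast+

lemma emb_obj: "sppuqu_obj (emb U)"
proof -
  have loc: "is_locale {x. x \<le> e}"
    unfolding is_locale_def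
  proof (intro conjI allI impI ballI)
    fix S :: "'q set" assume "S \<subseteq> {x. x \<le> e}" then show "Sup S \<in> {x. x \<le> e}" using Sup_le_e by blast
  next
    fix a b assume "a \<in> {x. x \<le> e}" "b \<in> {x. x \<le> e}" then show "inf a b \<in> {x. x \<le> e}"
      by (simp add: le_infI1)
  next
    fix a S assume a: "a \<in> {x. x \<le> e}" and S: "S \<subseteq> {x. (x::'q) \<le> e}"
    have "inf a (Sup S) = m a (Sup S)" using meet a Sup_le_e[OF S] by simp
    also have "\<dots> = Sup (m a ` S)" by (rule QS)
    also have "\<dots> = Sup (inf a ` S)"
      by (rule arg_cong[where f=Sup], rule image_cong, simp) (use meet a S in auto)
    finally show "inf a (Sup S) = Sup (inf a ` S)" .
  qed
  have bim: "is_bimodule {x. x \<le> e} m m"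
    unfolding is_bimodule_def using QS Un Sup_base assoc meet
    by (auto simp: meet[symmetric])
  have bq: "based_quantale (emb U)"
    unfolding based_quantale_def emb_def
    using loc bim Q I assoc
    by (auto simp: imul inv_id)
  have sup: "is_support (emb U)"
    unfolding is_support_def emb_def
    using sSup se s_top Sup_base m1[OF sxx] la se xsx
    by (auto intro: antisym)
  show ?thesis unfolding sppuqu_obj_def using bq sup obj
    unfolding usppqu_obj_def by (simp add: emb_def)
qed

end

lemma part2:
  assumes U: "usppqu_obj U" and V: "usppqu_obj V" and f: "usppqu_mor U V f"
  shows "sppuqu_mor (emb U) (emb V) f f"
proof -
  interpret u: uq U by (rule uq.intro[OF U])
  interpret v: uq V by (rule uq.intro[OF V])
  have fS: "\<forall>X. f (Sup X) = Sup (f ` X)" and fm: "\<And>x y. f (u.m x y) = v.m (f x) (f y)"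
    and fi: "\<And>x. f (u.i x) = v.i (f x)" and fe: "f u.e = v.e" and fs: "\<And>x. f (u.s x) = v.s (f x)"
    using f unfolding usppqu_mor_def by auto
  have fle: "a \<le> u.e \<Longrightarrow> f a \<le> v.e" for a using fun_mono[OF fS, of a u.e] fe by simp
  show ?thesis unfolding sppuqu_mor_def emb_def
    using fS fm fi fe fs fle u.Sup_base v.Sup_base
    by (auto simp: u.meet[symmetric] v.meet[symmetric])
qed

lemma part3:
  assumes U: "usppqu_obj U" and V: "usppqu_obj V" and f: "sppuqu_mor (emb U) (emb V) f1 f0"
  shows "usppqu_mor U V f1 \<and> (\<forall>a. a \<le> uunit U \<longrightarrow> f0 a = f1 a)"
proof -
  interpret u: uq U by (rule uq.intro[OF U])
  interpret v: uq V by (rule uq.intro[OF V])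
  have fe: "f1 u.e = v.e" and img: "\<And>a. a \<le> u.e \<Longrightarrow> f0 a \<le> v.e"
    and fl: "\<And>a x. a \<le> u.e \<Longrightarrow> f1 (u.m a x) = v.m (f0 a) (f1 x)"
    and fs: "\<And>x. f0 (u.s x) = v.s (f1 x)"
    using f unfolding sppuqu_mor_def emb_def by auto
  have eq: "a \<le> u.e \<Longrightarrow> f0 a = f1 a" for a
    using fl[of a u.e] fe u.Un v.Un by simp
  show ?thesis using f eq fs u.se
    unfolding sppuqu_mor_def usppqu_mor_def emb_def by auto
qed


locale sq =
  fixes S :: "('q::complete_lattice, 'a::complete_lattice) sqb"
  assumes obj: "sppuqu_obj S"
begin
abbreviation "A \<equiv> base S"
abbreviation "m \<equiv> qmul S"
abbreviation "e \<equiv> qunit S"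
abbreviation "la \<equiv> lact S"
abbreviation "ra \<equiv> ract S"
abbreviation "sp \<equiv> supp S"
abbreviation "i \<equiv> qinv S"

lemma BQ: "based_quantale S" and SP: "is_support S" and UN: "is_unit m e"
  using obj unfolding sppuqu_obj_def by auto
lemma BM: "is_bimodule A la ra" using BQ unfolding based_quantale_def by blast
lemma Q: "is_quantale m" using BQ unfolding based_quantale_def by blast
lemma I: "is_involution m i" using BQ unfolding based_quantale_def by blast
lemma Un: "m e x = x" "m x e = x" using UN unfolding is_unit_def by auto
lemma laSup: "X \<subseteq> A \<Longrightarrow> la (Sup X) x = Sup ((\<lambda>a. la a x) ` X)"
  using BM unfolding is_bimodule_def by blast
lemma la1: "la (Sup A) x = x" using BM unfolding is_bimodule_def by blast
lemma lainf: "a \<in> A \<Longrightarrow> b \<in> A \<Longrightarrow> la (inf a b) x = la a (la b x)"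
  using BM unfolding is_bimodule_def by blast
lemma mla: "a \<in> A \<Longrightarrow> m (la a x) y = la a (m x y)"
  using BQ unfolding based_quantale_def by blast
lemma mra: "a \<in> A \<Longrightarrow> m (ra x a) y = m x (la a y)"
  using BQ unfolding based_quantale_def by blast
lemma spA: "sp x \<in> A" using SP unfolding is_support_def by blast
lemma spSup: "sp (Sup X) = Sup (sp ` X)" using SP unfolding is_support_def by blast
lemma spx: "la (sp x) y \<le> m (m x (i x)) y" using SP unfolding is_support_def by blast
lemma spxx: "la (sp x) x = x" using SP unfolding is_support_def by blast

lemma la_mono: assumes "a \<in> A" "b \<in> A" "a \<le> b" shows "la a x \<le> la b x"
proof -
  have "la (sup a b) x = sup (la a x) (la b x)" using laSup[of "{a,b}" x] assms(1,2) by simp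
  then show ?thesis using sup_absorb2[OF assms(3)] by (metis sup.cobounded1)
qed

lemma lae: "a \<in> A \<Longrightarrow> la a e \<le> e"
  using la_mono[of a "Sup A" e] la1 BQ unfolding based_quantale_def is_locale_def
  by (simp add: Sup_upper)

lemma raS: "a \<in> A \<Longrightarrow> ra x a = m x (la a e)"
  using mra[of a x e] Un by simp
lemma laS: "a \<in> A \<Longrightarrow> la a x = m (la a e) x"
  using mla[of a e x] Un by simp

lemma refl_obj: "usppqu_obj (reflect S)"
proof -
  have j: "la (sp (Sup X)) e = Sup ((\<lambda>x. la (sp x) e) ` X)" for X
  proof -
    have "la (sp (Sup X)) e = la (Sup (sp ` X)) e" by (simp add: spSup)
    also have "\<dots> = Sup ((\<lambda>a. la a e) ` sp ` X)" using laSup[of "sp ` X"] spA by blast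
    finally show ?thesis by (simp add: image_image)
  qed
  have l2: "la (sp x) e \<le> m x (i x)" for x using spx[of x e] Un by simp
  have l3: "x \<le> m (la (sp x) e) x" for x using mla[OF spA, of x e x] Un spxx by simp
  show ?thesis unfolding usppqu_obj_def reflect_def
    using Q I UN j l2 l3 lae spA by simp
qed

end

lemma part4:
  fixes S :: "('q::complete_lattice, 'a::complete_lattice) sqb"
  assumes obj: "sppuqu_obj S"
  shows "usppqu_obj (reflect S) \<and>
        sppuqu_mor S (emb (reflect S)) id (\<lambda>a. lact S a (qunit S)) \<and>
        (\<forall>(V :: 'v::complete_lattice usq) f1 f0.
           usppqu_obj V \<and> sppuqu_mor S (emb V) f1 f0 \<longrightarrow>
             (\<exists>!g. usppqu_mor (reflect S) V g \<and> g \<circ> id = f1 \<and>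
                   (\<forall>a\<in>base S. (g \<circ> (\<lambda>a. lact S a (qunit S))) a = f0 a)))"
proof -
  interpret s: sq S by (rule sq.intro[OF obj])
  have RO: "usppqu_obj (reflect S)" by (rule s.refl_obj)
  interpret r: uq "reflect S" by (rule uq.intro[OF RO])
  have re: "r.e = s.e" "r.m = s.m" "r.i = s.i" "\<And>x. r.s x = s.la (s.sp x) s.e"
    by (simp_all add: reflect_def)
  have inf_eq: "a \<in> s.A \<Longrightarrow> b \<in> s.A \<Longrightarrow> s.la (inf a b) s.e = inf (s.la a s.e) (s.la b s.e)" for a b
    using s.lainf[of a b s.e] s.laS[of a "s.la b s.e"] r.meet[of "s.la a s.e" "s.la b s.e"] s.lae re
    by simp
  have supA: "X \<subseteq> s.A \<Longrightarrow> s.la (Sup X) s.e = Sup ((\<lambda>a. s.la a s.e) ` X)" for X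
    using s.laSup by blast
  have top: "s.la (Sup s.A) s.e = Sup {x. x \<le> s.e}"
    using s.la1 r.Sup_base re by simp
  have M: "sppuqu_mor S (emb (reflect S)) id (\<lambda>a. lact S a (qunit S))"
    unfolding sppuqu_mor_def
  proof (intro conjI allI ballI impI)
    show "(\<lambda>a. s.la a s.e) ` s.A \<subseteq> base (emb (reflect S))"
      using s.lae by (auto simp: emb_def reflect_def)
    show "s.la (Sup s.A) s.e = Sup (base (emb (reflect S)))"
      using top by (simp add: emb_def reflect_def)
  qed (use inf_eq supA s.laS[symmetric] s.raS in \<open>simp_all add: emb_def reflect_def\<close>)
  have U: "usppqu_obj V \<and> sppuqu_mor S (emb V) f1 f0 \<longrightarrow>
             (\<exists>!g. usppqu_mor (reflect S) V g \<and> g \<circ> id = f1 \<and>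
                   (\<forall>a\<in>base S. (g \<circ> (\<lambda>a. lact S a (qunit S))) a = f0 a))"
    for V :: "'v::complete_lattice usq" and f1 f0
  proof
    assume H: "usppqu_obj V \<and> sppuqu_mor S (emb V) f1 f0"
    interpret v: uq V by (rule uq.intro) (use H in blast)
    have fe: "f1 s.e = v.e" and img: "\<And>a. a \<in> s.A \<Longrightarrow> f0 a \<le> v.e"
      and fl: "\<And>a x. a \<in> s.A \<Longrightarrow> f1 (s.la a x) = v.m (f0 a) (f1 x)"
      and fs: "\<And>x. f0 (s.sp x) = v.s (f1 x)"
      using H unfolding sppuqu_mor_def emb_def by auto
    have eq: "a \<in> s.A \<Longrightarrow> f1 (s.la a s.e) = f0 a" for a
      using fl[of a s.e] fe v.Un by simp
    have "usppqu_mor (reflect S) V f1"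
      using H eq fs s.spA v.Un unfolding sppuqu_mor_def usppqu_mor_def reflect_def emb_def
      by simp
    then show "\<exists>!g. usppqu_mor (reflect S) V g \<and> g \<circ> id = f1 \<and>
                   (\<forall>a\<in>base S. (g \<circ> (\<lambda>a. lact S a (qunit S))) a = f0 a)"
      using eq by (intro ex1I[of _ f1]) auto
  qed
  show ?thesis using RO M U by blast
qed


theorem lemma3p13:
  shows
  "(\<forall>U :: 'u::complete_lattice usq. usppqu_obj U \<longrightarrow> sppuqu_obj (emb U))
   \<and> (\<forall>(U :: 'u::complete_lattice usq) (V :: 'v::complete_lattice usq) f.
        usppqu_obj U \<and> usppqu_obj V \<and> usppqu_mor U V f \<longrightarrow> sppuqu_mor (emb U) (emb V) f f)
   \<and> (\<forall>(U :: 'u::complete_lattice usq) (V :: 'v::complete_lattice usq) f1 f0.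
        usppqu_obj U \<and> usppqu_obj V \<and> sppuqu_mor (emb U) (emb V) f1 f0 \<longrightarrow>
          usppqu_mor U V f1 \<and> (\<forall>a. a \<le> uunit U \<longrightarrow> f0 a = f1 a))
   \<and> (\<forall>S :: ('q::complete_lattice, 'a::complete_lattice) sqb. sppuqu_obj S \<longrightarrow>
        usppqu_obj (reflect S) \<and>
        sppuqu_mor S (emb (reflect S)) id (\<lambda>a. lact S a (qunit S)) \<and>
        (\<forall>(V :: 'v::complete_lattice usq) f1 f0.
           usppqu_obj V \<and> sppuqu_mor S (emb V) f1 f0 \<longrightarrow>
             (\<exists>!g. usppqu_mor (reflect S) V g \<and> g \<circ> id = f1 \<and>
                   (\<forall>a\<in>base S. (g \<circ> (\<lambda>a. lact S a (qunit S))) a = f0 a))))"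
proof (intro conjI)
  show "\<forall>U :: 'u::complete_lattice usq. usppqu_obj U \<longrightarrow> sppuqu_obj (emb U)"
    using uq.emb_obj uq.intro by blast
  show "\<forall>(U :: 'u::complete_lattice usq) (V :: 'v::complete_lattice usq) f.
        usppqu_obj U \<and> usppqu_obj V \<and> usppqu_mor U V f \<longrightarrow> sppuqu_mor (emb U) (emb V) f f"
    using part2 by blast
  show "\<forall>(U :: 'u::complete_lattice usq) (V :: 'v::complete_lattice usq) f1 f0.
        usppqu_obj U \<and> usppqu_obj V \<and> sppuqu_mor (emb U) (emb V) f1 f0 \<longrightarrow>
          usppqu_mor U V f1 \<and> (\<forall>a. a \<le> uunit U \<longrightarrow> f0 a = f1 a)"
    using part3 by blast
  show "\<forall>S :: ('q::complete_lattice, 'a::complete_lattice) sqb. sppuqu_obj S \<longrightarrow>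
        usppqu_obj (reflect S) \<and>
        sppuqu_mor S (emb (reflect S)) id (\<lambda>a. lact S a (qunit S)) \<and>
        (\<forall>(V :: 'v::complete_lattice usq) f1 f0.
           usppqu_obj V \<and> sppuqu_mor S (emb V) f1 f0 \<longrightarrow>
             (\<exists>!g. usppqu_mor (reflect S) V g \<and> g \<circ> id = f1 \<and>
                   (\<forall>a\<in>base S. (g \<circ> (\<lambda>a. lact S a (qunit S))) a = f0 a)))"
    using part4 by blast
qed

end
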